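(* Let $(X,\mathcal{O}(X))$ be a measurable space, $\mathcal{A}$ a unital $C^*$-algebra and $\mathcal{H}$ a Hilbert space. Let $\pi:\mathcal{A}\to\mathcal{B}(\mathcal{H})$ be a unital $*$-homomorphism and $E:\mathcal{O}(X)\to\mathcal{B}(\mathcal{H})$ a spectral measure with $E(A)\pi(a)=\pi(a)E(A)$ for all $A,a$, and let $\pi E$ be the spectral instrument $\pi E(A,a)=\pi(a)E(A)$. Then the following are equivalent: (i) $\pi E$ is irreducible; (ii) $\pi$ is an irreducible representation of $\mathcal{A}$. Furthermore, in this case $E(\mathcal{O}(X))\subseteq\{0,I_\mathcal{H}\}$.
   Context: The spectral instrument $\pi E$ is called irreducible if it has no proper invariant subspace, equivalently $\{\pi(a)E(A):a\in\mathcal{A},A\in\mathcal{O}(X)\}'=\mathbb{C}I_\mathcal{H}$. A spectral measure is a projection-valued measure. *)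

theory Defs
  imports "HOL-Analysis.Analysis"
begin

class complex_vector = real_vector +
  fixes scaleC :: "complex \<Rightarrow> 'a \<Rightarrow> 'a"  (infixr \<open>*\<^sub>C\<close> 75)
  assumes scaleC_add_right: "a *\<^sub>C (x + y) = a *\<^sub>C x + a *\<^sub>C y"
    and scaleC_add_left: "(a + b) *\<^sub>C x = a *\<^sub>C x + b *\<^sub>C x"
    and scaleC_scaleC: "a *\<^sub>C (b *\<^sub>C x) = (a * b) *\<^sub>C x"
    and scaleC_one: "1 *\<^sub>C x = x"
    and scaleR_scaleC: "scaleR r x = complex_of_real r *\<^sub>C x"

class complex_normed_vector = complex_vector + real_normed_vector +
  assumes norm_scaleC: "norm (a *\<^sub>C x) = cmod a * norm x"

text \<open>Complex inner product, linear in the second and conjugate-linear in the first argument.\<close>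
class complex_inner = complex_normed_vector +
  fixes cinner :: "'a \<Rightarrow> 'a \<Rightarrow> complex"
  assumes cinner_conj: "cinner x y = cnj (cinner y x)"
    and cinner_add_right: "cinner x (y + z) = cinner x y + cinner x z"
    and cinner_scaleC_right: "cinner x (a *\<^sub>C y) = a * cinner x y"
    and cinner_self_norm: "cinner x x = complex_of_real ((norm x)\<^sup>2)"

class chilbert = complex_inner + complete_space

class cstar_algebra_1 = complex_normed_vector + real_normed_algebra_1 + complete_space +
  fixes cstar :: "'a \<Rightarrow> 'a"
  assumes scaleC_mult_left: "(a *\<^sub>C x) * y = a *\<^sub>C (x * y)"
    and scaleC_mult_right: "x * (a *\<^sub>C y) = a *\<^sub>C (x * y)"
    and cstar_cstar: "cstar (cstar x) = x"
    and cstar_add: "cstar (x + y) = cstar x + cstar y"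
    and cstar_scaleC: "cstar (a *\<^sub>C x) = cnj a *\<^sub>C cstar x"
    and cstar_mult: "cstar (x * y) = cstar y * cstar x"
    and cstar_identity: "norm (cstar x * x) = (norm x)\<^sup>2"

definition bounded_clinear :: "('h::complex_normed_vector \<Rightarrow> 'k::complex_normed_vector) \<Rightarrow> bool" where
  "bounded_clinear T \<longleftrightarrow> bounded_linear T \<and> (\<forall>c x. T (c *\<^sub>C x) = c *\<^sub>C T x)"

definition is_adjoint :: "('h::complex_inner \<Rightarrow> 'h) \<Rightarrow> ('h \<Rightarrow> 'h) \<Rightarrow> bool" where
  "is_adjoint T S \<longleftrightarrow> (\<forall>x y. cinner (T x) y = cinner x (S y))"

definition is_projection :: "('h::complex_inner \<Rightarrow> 'h) \<Rightarrow> bool" where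
  "is_projection P \<longleftrightarrow> bounded_clinear P \<and> P \<circ> P = P \<and> is_adjoint P P"

definition unital_star_hom :: "('a::cstar_algebra_1 \<Rightarrow> ('h::chilbert \<Rightarrow> 'h)) \<Rightarrow> bool" where
  "unital_star_hom \<pi> \<longleftrightarrow>
     (\<forall>a. bounded_clinear (\<pi> a)) \<and>
     (\<forall>a b x. \<pi> (a + b) x = \<pi> a x + \<pi> b x) \<and>
     (\<forall>c a x. \<pi> (c *\<^sub>C a) x = c *\<^sub>C \<pi> a x) \<and>
     (\<forall>a b. \<pi> (a * b) = \<pi> a \<circ> \<pi> b) \<and>
     \<pi> 1 = id \<and>
     (\<forall>a. is_adjoint (\<pi> a) (\<pi> (cstar a)))"

definition spectral_measure :: "'x measure \<Rightarrow> ('x set \<Rightarrow> ('h::chilbert \<Rightarrow> 'h)) \<Rightarrow> bool" where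
  "spectral_measure M E \<longleftrightarrow>
     (\<forall>A\<in>sets M. is_projection (E A)) \<and>
     E (space M) = id \<and>
     (\<forall>A\<in>sets M. \<forall>B\<in>sets M. E (A \<inter> B) = E A \<circ> E B) \<and>
     (\<forall>F. range F \<subseteq> sets M \<longrightarrow> disjoint_family F \<longrightarrow>
        (\<forall>x. (\<lambda>n. \<Sum>i<n. E (F i) x) \<longlonglongrightarrow> E (\<Union>i. F i) x))"

definition spectral_instrument :: "('a \<Rightarrow> ('h \<Rightarrow> 'h)) \<Rightarrow> ('x set \<Rightarrow> ('h \<Rightarrow> 'h)) \<Rightarrow> 'x set \<Rightarrow> 'a \<Rightarrow> ('h \<Rightarrow> 'h)" where
  "spectral_instrument \<pi> E A a = \<pi> a \<circ> E A"

definition csubspace :: "'h::complex_vector set \<Rightarrow> bool" where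
  "csubspace K \<longleftrightarrow> 0 \<in> K \<and> (\<forall>x\<in>K. \<forall>y\<in>K. x + y \<in> K) \<and> (\<forall>c. \<forall>x\<in>K. c *\<^sub>C x \<in> K)"

definition invariant_subspace :: "('h::complex_normed_vector \<Rightarrow> 'h) set \<Rightarrow> 'h set \<Rightarrow> bool" where
  "invariant_subspace S K \<longleftrightarrow> csubspace K \<and> closed K \<and> (\<forall>T\<in>S. T ` K \<subseteq> K)"

definition irreducible_family :: "('h::complex_normed_vector \<Rightarrow> 'h) set \<Rightarrow> bool" where
  "irreducible_family S \<longleftrightarrow> (\<forall>K. invariant_subspace S K \<longrightarrow> K = {0} \<or> K = UNIV)"

definition irreducible_representation :: "('a \<Rightarrow> ('h::complex_normed_vector \<Rightarrow> 'h)) \<Rightarrow> bool" where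
  "irreducible_representation \<pi> \<longleftrightarrow> irreducible_family (range \<pi>)"

definition irreducible_instrument ::
    "'x measure \<Rightarrow> ('x set \<Rightarrow> 'a \<Rightarrow> ('h::complex_normed_vector \<Rightarrow> 'h)) \<Rightarrow> bool" where
  "irreducible_instrument M I \<longleftrightarrow> irreducible_family {I A a | A a. A \<in> sets M}"

end

theory Submission
  imports Defs
begin

lemma fix_closed:
  assumes "bounded_linear (T::'h::real_normed_vector \<Rightarrow> 'h)"
  shows "closed {x. T x = x}"
proof -
  have "continuous_on UNIV T" using assms linear_continuous_on by blast
  then show ?thesis using closed_Collect_eq[of T "\<lambda>x. x"] continuous_on_id
    by blast
qed

theorem proposition2p14:
  fixes M :: "'x measure"
    and \<pi> :: "'a::cstar_algebra_1 \<Rightarrow> ('h::chilbert \<Rightarrow> 'h)"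
    and E :: "'x set \<Rightarrow> ('h \<Rightarrow> 'h)"
  assumes "unital_star_hom \<pi>"
    and "spectral_measure M E"
    and "\<forall>A\<in>sets M. \<forall>a. E A \<circ> \<pi> a = \<pi> a \<circ> E A"
  shows "(irreducible_instrument M (spectral_instrument \<pi> E) \<longleftrightarrow> irreducible_representation \<pi>)
    \<and> (irreducible_representation \<pi> \<longrightarrow> (\<forall>A\<in>sets M. E A = (\<lambda>x. 0) \<or> E A = id))"
proof -
  have proj: "\<And>A. A \<in> sets M \<Longrightarrow> is_projection (E A)"
    using assms(2) unfolding spectral_measure_def by blast
  have Esp: "E (space M) = id" using assms(2) unfolding spectral_measure_def by blast
  have Emult: "\<And>A B. A \<in> sets M \<Longrightarrow> B \<in> sets M \<Longrightarrow> E (A \<inter> B) = E A \<circ> E B"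
    using assms(2) unfolding spectral_measure_def by blast
  have comm: "\<And>A B. A \<in> sets M \<Longrightarrow> B \<in> sets M \<Longrightarrow> E A \<circ> E B = E B \<circ> E A"
    by (metis Emult Int_commute)
  have bl: "\<And>A. A \<in> sets M \<Longrightarrow> bounded_linear (E A)"
    using proj unfolding is_projection_def bounded_clinear_def by blast
  have sc: "\<And>A c x. A \<in> sets M \<Longrightarrow> E A (c *\<^sub>C x) = c *\<^sub>C E A x"
    using proj unfolding is_projection_def bounded_clinear_def by blast
  have idem: "\<And>A. A \<in> sets M \<Longrightarrow> E A \<circ> E A = E A"
    using proj unfolding is_projection_def by blast
  let ?S = "{spectral_instrument \<pi> E A a | A a. A \<in> sets M}"
  have dir1: "irreducible_representation \<pi> \<Longrightarrow> irreducible_family ?S"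
  proof -
    assume ir: "irreducible_representation \<pi>"
    show ?thesis unfolding irreducible_family_def
    proof (intro allI impI)
      fix K assume K: "invariant_subspace ?S K"
      have "invariant_subspace (range \<pi>) K"
        unfolding invariant_subspace_def
      proof (intro conjI ballI)
        show "csubspace K" "closed K" using K unfolding invariant_subspace_def by auto
        fix T assume "T \<in> range \<pi>"
        then obtain a where T: "T = \<pi> a" by blast
        have "spectral_instrument \<pi> E (space M) a \<in> ?S" by blast
        moreover have "spectral_instrument \<pi> E (space M) a = T"
          unfolding spectral_instrument_def Esp T by simp
        moreover have "\<forall>T\<in>?S. T ` K \<subseteq> K" using K unfolding invariant_subspace_def by (elim conjE)
        ultimately show "T ` K \<subseteq> K" by simp
      qed
      then show "K = {0} \<or> K = UNIV" using ir
        unfolding irreducible_representation_def irreducible_family_def by blast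
    qed
  qed
  have step1: "irreducible_family ?S \<Longrightarrow> \<forall>A\<in>sets M. E A = (\<lambda>x. 0) \<or> E A = id"
  proof
    fix A assume ir: "irreducible_family ?S" and A: "A \<in> sets M"
    let ?K = "{x. E A x = x}"
    have lin: "linear (E A)" using bl[OF A] bounded_linear.linear by blast
    have "invariant_subspace ?S ?K"
      unfolding invariant_subspace_def
    proof (intro conjI ballI)
      show "csubspace ?K" unfolding csubspace_def
        using linear_0[OF lin] linear_add[OF lin] sc[OF A] by auto
      show "closed ?K" using fix_closed bl A by blast
      fix T assume "T \<in> ?S"
      then obtain B a where B: "B \<in> sets M" and T: "T = \<pi> a \<circ> E B"
        unfolding spectral_instrument_def by blast
      show "T ` ?K \<subseteq> ?K"
      proof
        fix y assume "y \<in> T ` ?K"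
        then obtain x where x: "E A x = x" and y: "y = \<pi> a (E B x)" using T by auto
        have "E A y = (E A \<circ> \<pi> a) (E B x)" using y by simp
        also have "\<dots> = \<pi> a ((E A \<circ> E B) x)" using assms(3) A by simp
        also have "\<dots> = \<pi> a ((E B \<circ> E A) x)" using comm[OF A B] by simp
        also have "\<dots> = y" using x y by simp
        finally show "y \<in> ?K" by simp
      qed
    qed
    then have "?K = {0} \<or> ?K = UNIV" using ir unfolding irreducible_family_def by blast
    then show "E A = (\<lambda>x. 0) \<or> E A = id"
    proof
      assume K0: "?K = {0}"
      have "\<And>x. E A x = 0"
      proof -
        fix x have "E A (E A x) = E A x" using idem[OF A] by (metis comp_apply)
        then have "E A x \<in> ?K" by simp
        then show "E A x = 0" using K0 by blast
      qed
      then show ?thesis by auto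
    next
      assume "?K = UNIV" then have "\<And>x. E A x = x" by blast
      then show ?thesis by auto
    qed
  qed
  have dir2: "irreducible_family ?S \<Longrightarrow> irreducible_representation \<pi>"
  proof -
    assume ir: "irreducible_family ?S"
    note E01 = step1[OF ir]
    show ?thesis unfolding irreducible_representation_def irreducible_family_def
    proof (intro allI impI)
      fix K assume K: "invariant_subspace (range \<pi>) K"
      have "invariant_subspace ?S K" unfolding invariant_subspace_def
      proof (intro conjI ballI)
        show "csubspace K" "closed K" using K unfolding invariant_subspace_def by auto
        have z: "0 \<in> K" using K unfolding invariant_subspace_def csubspace_def by blast
        fix T assume "T \<in> ?S"
        then obtain B a where B: "B \<in> sets M" and T: "T = \<pi> a \<circ> E B"
          unfolding spectral_instrument_def by blast
        have pa: "\<pi> a ` K \<subseteq> K" using K unfolding invariant_subspace_def by blast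
        have "bounded_linear (\<pi> a)" using assms(1) unfolding unital_star_hom_def bounded_clinear_def by blast
        then have pa0: "\<pi> a 0 = 0" by (rule linear_simps)
        from E01 B have "E B = (\<lambda>x. 0) \<or> E B = id" by blast
        then show "T ` K \<subseteq> K"
        proof
          assume "E B = (\<lambda>x. 0)" then show ?thesis using T pa0 z by auto
        next
          assume "E B = id" then show ?thesis using T pa by auto
        qed
      qed
      then show "K = {0} \<or> K = UNIV" using ir unfolding irreducible_family_def by blast
    qed
  qed
  show ?thesis unfolding irreducible_instrument_def
    using dir1 dir2 step1 by blast
qed

end
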